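(* Let $Z\in\mathbb S^n$ be nonsingular with eigenvalue decomposition $Z=Q\operatorname{diag}(\lambda_1,\dots,\lambda_r,\lambda_{r+1},\dots,\lambda_n)Q^\top$, where $\lambda_1\ge\dots\ge\lambda_r>0>\lambda_{r+1}\ge\dots\ge\lambda_n$ and $Q$ is orthogonal. Then there exist positive constants $C_{\mathrm{EB}}$ and $\alpha_{\mathrm{EB}}$ such that for all $H\in\mathbb S^n$ with $\|H\|_2\le C_{\mathrm{EB}}$, $$\big\|\Pi_{\mathbb S^n_+}(Z+H)-\Pi_{\mathbb S^n_+}(Z)-Q(\Omega\circ\tilde H)Q^\top\big\|_2\le\alpha_{\mathrm{EB}}\,\|\tilde H_O\|_2\,\|H\|_2,$$ where $\tilde H:=Q^\top HQ=\begin{pmatrix}\tilde H_X&\tilde H_O^\top\\ \tilde H_O&\tilde H_S\end{pmatrix}$ with $\tilde H_X\in\mathbb S^r$, $\tilde H_S\in\mathbb S^{n-r}$, $\tilde H_O\in\mathbb R^{(n-r)\times r}$.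
   Context: $\mathbb S^n$ is the space of real symmetric $n\times n$ matrices, $\Pi_{\mathbb S^n_+}$ the Frobenius-orthogonal projection onto the positive semidefinite cone, $\|\cdot\|_2$ the spectral norm, $\circ$ the Hadamard (entrywise) product. $\Omega=\begin{pmatrix}E_r&\Theta^\top\\ \Theta&0\end{pmatrix}$ where $E_r$ is the $r\times r$ all-ones matrix and $\Theta\in\mathbb R^{(n-r)\times r}$ has entries $\Theta_{ij}=\lambda_j/(\lambda_j-\lambda_{i+r})$ for $i\in[n-r]$, $j\in[r]$. *)

theory Defs
  imports "HOL-Analysis.Analysis"
begin

definition spec_norm :: "real^'n^'m \<Rightarrow> real" where
  "spec_norm A = onorm (\<lambda>x. A *v x)"

text \<open>Note: the library norm on real^'n^'n is the Frobenius norm.\<close>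
definition psd :: "real^'n^'n \<Rightarrow> bool" where
  "psd A \<longleftrightarrow> transpose A = A \<and> (\<forall>x. 0 \<le> x \<bullet> (A *v x))"

definition proj_psd :: "real^'n^'n \<Rightarrow> real^'n^'n" where
  "proj_psd Z = (THE P. psd P \<and> (\<forall>Y. psd Y \<longrightarrow> norm (Z - P) \<le> norm (Z - Y)))"

definition diag_mat :: "('n \<Rightarrow> real) \<Rightarrow> real^'n^'n" where
  "diag_mat l = (\<chi> i j. if i = j then l i else 0)"

definition hadamard :: "real^'n^'m \<Rightarrow> real^'n^'m \<Rightarrow> real^'n^'m" where
  "hadamard A B = (\<chi> i j. A $ i $ j * B $ i $ j)"

text \<open>With eigenvalues sorted decreasingly, index i lies in the
  first block (1..r) iff l i > 0 and in the second block iff l i < 0.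
  Entry (r+i, j) of Omega is Theta_ij = l_j/(l_j - l_(i+r)); entry (j, r+i) is Theta_ij too.\<close>
definition Omega :: "('n \<Rightarrow> real) \<Rightarrow> real^'n^'n" where
  "Omega l = (\<chi> i j.
     if 0 < l i \<and> 0 < l j then 1
     else if l i < 0 \<and> 0 < l j then l j / (l j - l i)
     else if 0 < l i \<and> l j < 0 then l i / (l i - l j)
     else 0)"

text \<open>Off-diagonal block H_O (rows in the negative block, columns in the positive block),
  zero-padded to an n x n matrix (zero padding does not change the spectral norm).\<close>
definition off_block :: "('n \<Rightarrow> real) \<Rightarrow> real^'n^'n \<Rightarrow> real^'n^'n" where
  "off_block l A = (\<chi> i j. if l i < 0 \<and> 0 < l j then A $ i $ j else 0)"

end

theory Submission
  imports Defs
begin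

lemma mm_add_r: "((A::real^'n^'m) + B) ** C = A ** C + B ** C"
  by (vector matrix_matrix_mult_def sum.distrib field_simps)
lemma mm_diff_l: "(A::real^'n^'m) ** (B - C) = A ** B - A ** C"
  by (vector matrix_matrix_mult_def sum_subtractf field_simps)
lemma mm_diff_r: "((A::real^'n^'m) - B) ** C = A ** C - B ** C"
  by (vector matrix_matrix_mult_def sum_subtractf field_simps)
lemma transpose_add: "transpose ((A::real^'n^'m) + B) = transpose A + transpose B"
  by (vector transpose_def)
lemma transpose_diff: "transpose ((A::real^'n^'m) - B) = transpose A - transpose B"
  by (vector transpose_def)
lemma transpose_diag[simp]: "transpose (diag_mat d) = diag_mat d"
  by (vector transpose_def diag_mat_def)
lemma diag_left[simp]: "(diag_mat d ** M) $ i $ j = d i * M $ i $ j"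
  unfolding diag_mat_def matrix_matrix_mult_def
  by (simp add: if_distrib if_distribR sum.delta cong: if_cong)
lemma diag_right[simp]: "(M ** diag_mat d) $ i $ j = M $ i $ j * d j"
  unfolding diag_mat_def matrix_matrix_mult_def
  by (simp add: if_distrib if_distribR sum.delta' cong: if_cong)
lemma diag_diag: "diag_mat a ** diag_mat b = diag_mat (\<lambda>k. a k * b k)"
  by (simp add: vec_eq_iff) (simp add: diag_mat_def)
lemma diag_add: "diag_mat a + diag_mat b = diag_mat (\<lambda>k. a k + b k)"
  by (vector diag_mat_def)
lemma diag_diff: "diag_mat a - diag_mat b = diag_mat (\<lambda>k. a k - b k)"
  by (vector diag_mat_def)
lemma diag_one: "diag_mat (\<lambda>k. 1) = mat 1"
  by (vector diag_mat_def mat_def)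
lemma diag_vec[simp]: "(diag_mat d *v x) $ i = d i * x $ i"
  unfolding diag_mat_def matrix_vector_mult_def
  by (simp add: if_distrib if_distribR sum.delta cong: if_cong)

lemma sym_inner: assumes "transpose A = A"
  shows "inner (A *v x) y = inner x (A *v (y::real^'n))"
proof -
  have "inner (A *v x) y = inner (x v* A) y"
    by (metis assms transpose_matrix_vector)
  then show ?thesis by (simp add: dot_lmul_matrix)
qed

lemma eigvec_exists:
  fixes A :: "real^'n^'n"
  assumes sym: "transpose A = A" and S: "subspace S" and nz: "y0 \<in> S" "y0 \<noteq> 0"
    and inv: "\<And>x. x \<in> S \<Longrightarrow> A *v x \<in> S"
  obtains x c where "x \<in> S" "norm x = 1" "A *v x = c *\<^sub>R x"
proof -
  define K where "K = S \<inter> sphere 0 1"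
  have "compact K" unfolding K_def
    using closed_subspace[OF S] by (metis compact_Int_closed compact_sphere Int_commute)
  moreover have "(1 / norm y0) *\<^sub>R y0 \<in> K"
    using nz S unfolding K_def by (simp add: subspace_scale)
  hence "K \<noteq> {}" by auto
  moreover have "continuous_on K (\<lambda>x. inner x (A *v x))"
    by (intro continuous_intros)
  ultimately obtain x where xK: "x \<in> K" and xmax: "\<And>y. y \<in> K \<Longrightarrow> inner y (A *v y) \<le> inner x (A *v x)"
    using continuous_attains_sup by metis
  define c where "c = inner x (A *v x)"
  have xS: "x \<in> S" and nx: "norm x = 1" using xK by (auto simp: K_def)
  have bound: "inner z (A *v z) \<le> c * (norm z)^2" if "z \<in> S" for z
  proof (cases "z = 0")
    case True then show ?thesis by simp
  next
    case False
    have "(1 / norm z) *\<^sub>R z \<in> K" using False that S by (simp add: K_def subspace_scale)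
    from xmax[OF this] have "(1/norm z)^2 * inner z (A *v z) \<le> c"
      by (simp add: c_def matrix_vector_mult_scaleR power2_eq_square algebra_simps)
    then show ?thesis using False
      by (simp add: field_simps power2_eq_square)
  qed
  define g where "g z = c * (norm z)^2 - inner z (A *v z)" for z
  have g0: "g x = 0" by (simp add: g_def c_def nx)
  have gpos: "g z \<ge> 0" if "z \<in> S" for z using bound[OF that] by (simp add: g_def)
  define u where "u = c *\<^sub>R x - A *v x"
  have uS: "u \<in> S" unfolding u_def using xS inv S by (simp add: subspace_diff subspace_scale)
  have b0: "inner y u = 0" if yS: "y \<in> S" for y
  proof -
    define b where "b = inner y u"
    have exp: "g (x + t *\<^sub>R y) = 2 * t * b + t^2 * g y" for t
    proof -
      have s: "inner y (A *v x) = inner x (A *v y)"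
        using sym_inner[OF sym, of y x] by (simp add: inner_commute)
      have "(norm (x + t *\<^sub>R y))^2 = inner (x + t *\<^sub>R y) (x + t *\<^sub>R y)" by (rule power2_norm_eq_inner)
      also have "\<dots> = inner x x + 2 * t * inner x y + t^2 * inner y y"
        by (simp add: inner_add_left inner_add_right inner_commute[of y x] power2_eq_square algebra_simps)
      also have "\<dots> = 1 + 2 * t * inner x y + t^2 * (norm y)^2"
        using nx by (simp add: power2_norm_eq_inner[symmetric])
      finally have n2: "(norm (x + t *\<^sub>R y))^2 = 1 + 2 * t * inner x y + t^2 * (norm y)^2" .
      have q: "inner (x + t *\<^sub>R y) (A *v (x + t *\<^sub>R y)) = c + 2 * t * inner y (A *v x) + t^2 * inner y (A *v y)"
        using s by (simp add: c_def inner_add_left inner_add_right matrix_vector_right_distrib matrix_vector_mult_scaleR algebra_simps power2_eq_square)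
      have gy: "g y = c * (norm y)^2 - inner y (A *v y)" by (simp add: g_def)
      show ?thesis
        unfolding g_def n2 q b_def u_def
        by (simp add: gy inner_diff_right algebra_simps power2_eq_square inner_commute[of y x])
    qed
    have "g (x + t *\<^sub>R y) \<ge> 0" for t using S xS yS by (intro gpos) (simp add: subspace_add subspace_scale)
    hence h: "2 * t * b + t^2 * g y \<ge> 0" for t using exp by simp
    have gy: "g y \<ge> 0" using gpos yS .
    have G1: "g y + 1 > 0" using gy by simp
    define t where "t = - b / (g y + 1)"
    have "(g y + 1) * t = - b" unfolding t_def using G1 by simp
    hence bt: "b = - (g y + 1) * t" by (simp add: algebra_simps)
    have "2 * t * b + t^2 * g y = - (t^2 * (g y + 2))" unfolding bt by (simp add: algebra_simps power2_eq_square)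
    hence "t^2 * (g y + 2) \<le> 0" using h[of t] by simp
    hence "t^2 \<le> 0" using gy by (auto simp: mult_le_0_iff)
    hence "t = 0" by simp
    hence "b = 0" using bt by simp
    thus ?thesis unfolding b_def by simp
  qed
  have "u = 0" using b0[OF uS] by simp
  hence "A *v x = c *\<^sub>R x" by (simp add: u_def)
  thus ?thesis using that xS nx by blast
qed


lemma spectral_aux:
  fixes A :: "real^'n^'n"
  assumes sym: "transpose A = A"
  shows "k \<le> CARD('n) \<Longrightarrow> \<exists>B. finite B \<and> card B = k \<and> (\<forall>x\<in>B. norm x = 1 \<and> (\<exists>c. A *v x = c *\<^sub>R x)) \<and> pairwise orthogonal B"
proof (induction k)
  case 0
  show ?case by (intro exI[of _ "{}"]) auto
next
  case (Suc k)
  then obtain B where fB: "finite B" and cB: "card B = k" and eB: "\<forall>x\<in>B. norm x = 1 \<and> (\<exists>c. A *v x = c *\<^sub>R x)"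
    and oB: "pairwise orthogonal B" by auto
  define S where "S = {y. \<forall>x \<in> B. orthogonal x y}"
  have S: "subspace S" unfolding S_def by (rule subspace_orthogonal_to_vectors)
  have "dim B \<le> card B" using fB by (simp add: dim_le_card')
  hence "dim B < DIM(real^'n)" using Suc.prems cB by simp
  then obtain y0 where y0: "y0 \<noteq> 0" "\<And>y. y \<in> span B \<Longrightarrow> orthogonal y0 y"
    using orthogonal_to_subspace_exists by blast
  have y0S: "y0 \<in> S" unfolding S_def using y0(2) span_base orthogonal_commute by blast
  have inv: "A *v y \<in> S" if "y \<in> S" for y
    unfolding S_def
  proof (intro CollectI ballI)
    fix x assume "x \<in> B"
    then obtain c where c: "A *v x = c *\<^sub>R x" using eB by blast
    have "orthogonal x y" using that \<open>x \<in> B\<close> by (simp add: S_def)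
    hence "inner (A *v x) y = 0" by (simp add: c orthogonal_def)
    thus "orthogonal x (A *v y)" using sym_inner[OF sym, of x y] by (simp add: orthogonal_def)
  qed
  obtain x c where xS: "x \<in> S" and nx: "norm x = 1" and ex: "A *v x = c *\<^sub>R x"
    using eigvec_exists[OF sym S y0S y0(1) inv] by blast
  have xB: "x \<notin> B"
  proof
    assume "x \<in> B"
    hence "orthogonal x x" using xS by (simp add: S_def)
    thus False using nx by (simp add: orthogonal_def)
  qed
  show ?case
  proof (intro exI[of _ "insert x B"] conjI)
    show "finite (insert x B)" using fB by simp
    show "card (insert x B) = Suc k" using fB xB cB by simp
    show "\<forall>z\<in>insert x B. norm z = 1 \<and> (\<exists>c. A *v z = c *\<^sub>R z)" using eB nx ex by blast
    show "pairwise orthogonal (insert x B)"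
      using oB xS unfolding pairwise_insert S_def by (auto simp: orthogonal_commute)
  qed
qed

theorem spectral:
  fixes A :: "real^'n^'n"
  assumes sym: "transpose A = A"
  obtains V \<mu> where "orthogonal_matrix V" "A = V ** diag_mat \<mu> ** transpose V"
proof -
  obtain B where fB: "finite B" and cB: "card B = CARD('n)" and eB: "\<forall>x\<in>B. norm x = 1 \<and> (\<exists>c. A *v x = c *\<^sub>R x)"
    and oB: "pairwise orthogonal B" using spectral_aux[OF sym, of "CARD('n)"] by auto
  obtain f where bf: "bij_betw f (UNIV::'n set) B"
    using finite_same_card_bij[of "UNIV::'n set" B] fB cB by auto
  define V :: "real^'n^'n" where "V = (\<chi> i j. f j $ i)"
  define \<mu> where "\<mu> j = (SOME c. A *v f j = c *\<^sub>R f j)" for j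
  have fB': "f j \<in> B" for j using bf by (auto simp: bij_betw_def)
  have colV: "column j V = f j" for j by (simp add: V_def column_def)
  have mu: "A *v f j = \<mu> j *\<^sub>R f j" for j
    unfolding \<mu>_def using eB fB' by (metis (mono_tags, lifting) someI_ex)
  have oV: "orthogonal_matrix V"
    unfolding orthogonal_matrix_orthonormal_columns colV
  proof (intro conjI allI impI)
    fix i show "norm (f i) = 1" using eB fB' by blast
  next
    fix i j :: 'n assume "i \<noteq> j"
    hence "f i \<noteq> f j" using bf by (auto simp: bij_betw_def inj_on_def)
    thus "orthogonal (f i) (f j)" using oB fB' by (auto simp: pairwise_def)
  qed
  have AV: "A ** V = V ** diag_mat \<mu>"
  proof -
    have "(A ** V) $ i $ j = (V ** diag_mat \<mu>) $ i $ j" for i j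
    proof -
      have "(A ** V) $ i $ j = (A *v f j) $ i"
        by (simp add: matrix_matrix_mult_def matrix_vector_mult_def V_def)
      also have "\<dots> = \<mu> j * f j $ i" by (simp add: mu)
      finally show ?thesis by (simp add: V_def)
    qed
    thus ?thesis by (simp add: vec_eq_iff)
  qed
  have "A = A ** (V ** transpose V)" using oV by (simp add: orthogonal_matrix_def)
  also have "\<dots> = V ** diag_mat \<mu> ** transpose V" by (simp add: matrix_mul_assoc AV)
  finally show ?thesis using that oV by blast
qed


definition sp :: "real^'n^'n \<Rightarrow> ('n \<Rightarrow> real) \<Rightarrow> real^'n^'n" where
  "sp V d = V ** diag_mat d ** transpose V"

lemma mm_entry: "((A::real^'n^'m) ** B) $ i $ j = (\<Sum>k\<in>UNIV. A $ i $ k * B $ k $ j)"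
  by (simp add: matrix_matrix_mult_def)

context fixes V :: "real^'n^'n" assumes oV: "orthogonal_matrix V"
begin

lemma VtV: "transpose V ** V = mat 1" and VVt: "V ** transpose V = mat 1"
  using oV by (auto simp: orthogonal_matrix_def)

lemma sp_mul: "sp V a ** sp V b = sp V (\<lambda>k. a k * b k)"
proof -
  have "sp V a ** sp V b = V ** diag_mat a ** (transpose V ** V) ** diag_mat b ** transpose V"
    by (simp add: sp_def matrix_mul_assoc)
  also have "\<dots> = V ** (diag_mat a ** diag_mat b) ** transpose V" by (simp add: VtV matrix_mul_assoc)
  also have "\<dots> = sp V (\<lambda>k. a k * b k)" by (simp add: sp_def diag_diag)
  finally show ?thesis .
qed

lemma sp_add: "sp V a + sp V b = sp V (\<lambda>k. a k + b k)"
  by (simp add: sp_def diag_add[symmetric] matrix_add_ldistrib mm_add_r)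
lemma sp_diff: "sp V a - sp V b = sp V (\<lambda>k. a k - b k)"
  by (simp add: sp_def diag_diff[symmetric] mm_diff_l mm_diff_r)
lemma sp_one: "sp V (\<lambda>k. 1) = mat 1"
  by (simp add: sp_def diag_one VVt)
lemma sp_transpose: "transpose (sp V a) = sp V a"
  by (simp add: sp_def matrix_transpose_mul matrix_mul_assoc)

lemma sp_col: "sp V a *v column k V = a k *\<^sub>R column k V"
proof -
  have c: "column k V = V *v axis k 1"
    by (simp add: column_def matrix_vector_mult_def axis_def vec_eq_iff if_distrib if_distribR sum.delta' cong: if_cong)
  have "sp V a *v column k V = V *v (diag_mat a *v ((transpose V ** V) *v axis k 1))"
    by (simp add: c sp_def matrix_vector_mul_assoc matrix_mul_assoc)
  also have "\<dots> = V *v (a k *\<^sub>R axis k 1)"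
  proof -
    have "diag_mat a *v axis k 1 = a k *\<^sub>R axis k (1::real)" by (simp add: vec_eq_iff axis_def)
    thus ?thesis by (simp add: VtV)
  qed
  finally show ?thesis by (simp add: c matrix_vector_mult_scaleR)
qed

lemma inner_Vt: "inner w (V *v z) = inner (transpose V *v w) z"
  by (simp add: dot_lmul_matrix[symmetric])

lemma sp_quad: "inner w (sp V a *v w) = (\<Sum>k\<in>UNIV. a k * ((transpose V *v w) $ k)^2)"
proof -
  have "inner w (sp V a *v w) = inner (transpose V *v w) (diag_mat a *v (transpose V *v w))"
    by (simp add: sp_def matrix_vector_mul_assoc[symmetric] inner_Vt)
  also have "\<dots> = (\<Sum>k\<in>UNIV. a k * ((transpose V *v w) $ k)^2)"
    by (simp add: inner_vec_def power2_eq_square mult_ac)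
  finally show ?thesis .
qed

lemma sp_normsq: "(norm w)^2 = (\<Sum>k\<in>UNIV. ((transpose V *v w) $ k)^2)"
proof -
  have "(norm w)^2 = inner w (sp V (\<lambda>k. 1) *v w)" by (simp add: sp_one power2_norm_eq_inner)
  thus ?thesis by (simp add: sp_quad)
qed

lemma sp_inner: "inner (sp V a) Y = (\<Sum>k\<in>UNIV. a k * inner (column k V) (Y *v column k V))"
proof -
  have e: "sp V a $ i $ j = (\<Sum>k\<in>UNIV. V $ i $ k * a k * V $ j $ k)" for i j
    unfolding sp_def mm_entry[of "V ** diag_mat a"] by (simp add: transpose_def)
  have "inner (sp V a) Y = (\<Sum>i\<in>UNIV. \<Sum>j\<in>UNIV. sp V a $ i $ j * Y $ i $ j)"
    by (simp add: inner_vec_def)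
  also have "\<dots> = (\<Sum>i\<in>UNIV. \<Sum>j\<in>UNIV. \<Sum>k\<in>UNIV. a k * (V $ i $ k * (Y $ i $ j * V $ j $ k)))"
    by (simp add: e sum_distrib_right sum_distrib_left mult_ac)
  also have "\<dots> = (\<Sum>k\<in>UNIV. \<Sum>i\<in>UNIV. \<Sum>j\<in>UNIV. a k * (V $ i $ k * (Y $ i $ j * V $ j $ k)))"
    by (subst sum.swap, subst (2) sum.swap) (rule refl)
  also have "\<dots> = (\<Sum>k\<in>UNIV. a k * inner (column k V) (Y *v column k V))"
    by (simp add: inner_vec_def column_def matrix_vector_mult_def sum_distrib_left)
  finally show ?thesis .
qed

lemma sp_psd: "(\<And>k. a k \<ge> 0) \<Longrightarrow> psd (sp V a)"
  unfolding psd_def by (simp add: sp_transpose sp_quad sum_nonneg)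

lemma proj_sp: "proj_psd (sp V \<mu>) = sp V (\<lambda>k. max (\<mu> k) 0)"
proof -
  define A where "A = sp V \<mu>"
  define P where "P = sp V (\<lambda>k. max (\<mu> k) 0)"
  define N where "N = sp V (\<lambda>k. max (- \<mu> k) 0)"
  have AP: "A - P = - N" unfolding A_def P_def N_def
  proof -
    have "sp V \<mu> - sp V (\<lambda>k. max (\<mu> k) 0) = sp V (\<lambda>k. - max (- \<mu> k) 0) "
      unfolding sp_diff by (rule arg_cong[where f="sp V"]) (auto simp: fun_eq_iff)
    also have "\<dots> = sp V (\<lambda>k. 0) - sp V (\<lambda>k. max (- \<mu> k) 0)" unfolding sp_diff by simp
    also have "sp V (\<lambda>k. 0) = 0" by (simp add: sp_def vec_eq_iff diag_mat_def matrix_matrix_mult_def)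
    finally show "sp V \<mu> - sp V (\<lambda>k. max (\<mu> k) 0) = - sp V (\<lambda>k. max (- \<mu> k) 0)" by simp
  qed
  have Ppsd: "psd P" unfolding P_def by (rule sp_psd) simp
  have NP: "inner N P = 0"
    unfolding N_def P_def sp_inner sp_col
    by (rule sum.neutral) auto
  have NY: "inner N Y \<ge> 0" if "psd Y" for Y
    unfolding N_def sp_inner using that
    by (intro sum_nonneg mult_nonneg_nonneg) (auto simp: psd_def)
  have key: "(norm (A - Y))^2 \<ge> (norm (A - P))^2 + (norm (P - Y))^2" if "psd Y" for Y
  proof -
    have "A - Y = - N + (P - Y)" using AP by (simp add: algebra_simps)
    have sq: "(norm (u + v))^2 = (norm u)^2 + 2 * inner u v + (norm v)^2" for u v :: "real^'n^'n"
      by (simp add: power2_norm_eq_inner inner_add_left inner_add_right inner_commute)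
    have "(norm (A - Y))^2 = (norm N)^2 - 2 * inner N (P - Y) + (norm (P - Y))^2"
      unfolding \<open>A - Y = - N + (P - Y)\<close> sq by simp
    also have "inner N (P - Y) = - inner N Y" using NP by (simp add: inner_diff_right)
    finally show ?thesis using NY[OF that] AP by simp
  qed
  have "proj_psd A = P"
    unfolding proj_psd_def
  proof (rule the_equality)
    show "psd P \<and> (\<forall>Y. psd Y \<longrightarrow> norm (A - P) \<le> norm (A - Y))"
    proof (intro conjI allI impI Ppsd)
      fix Y :: "real^'n^'n" assume "psd Y"
      from key[OF this] have "(norm (A - P))^2 \<le> (norm (A - Y))^2"
        by (smt (verit) zero_le_power2)
      thus "norm (A - P) \<le> norm (A - Y)" using power2_le_imp_le norm_ge_zero by blast
    qed
  next
    fix P' assume h: "psd P' \<and> (\<forall>Y. psd Y \<longrightarrow> norm (A - P') \<le> norm (A - Y))"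
    hence "norm (A - P') \<le> norm (A - P)" using Ppsd by blast
    hence h2: "(norm (A - P'))^2 \<le> (norm (A - P))^2" by (simp add: power_mono)
    have "(norm (P - P'))^2 \<le> 0" using key[of P'] h h2 by linarith
    thus "P' = P" by simp
  qed
  thus ?thesis by (simp add: A_def P_def)
qed

end

lemma normsq_entries: "(norm (A::real^'n^'m))^2 = (\<Sum>i\<in>UNIV. \<Sum>j\<in>UNIV. (A$i$j)^2)"
  unfolding power2_norm_eq_inner by (simp add: inner_vec_def power2_eq_square)

lemma norm_mono_entries:
  assumes "\<And>i j. \<bar>(A::real^'n^'m)$i$j\<bar> \<le> \<bar>B$i$j\<bar>"
  shows "norm A \<le> norm B"
  by (rule norm_le_componentwise_cart, rule norm_le_componentwise_cart) (simp add: assms)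

lemma norm_abs_mat: "norm (\<chi> i j. \<bar>(B::real^'n^'m)$i$j\<bar>) = norm B"
  by (intro antisym norm_mono_entries) simp_all

lemma dominate4:
  fixes A B1 B2 B3 B4 :: "real^'n^'m"
  assumes "\<And>i j. \<bar>A$i$j\<bar> \<le> c * (\<bar>B1$i$j\<bar> + \<bar>B2$i$j\<bar> + \<bar>B3$i$j\<bar> + \<bar>B4$i$j\<bar>)" and c: "c \<ge> 0"
  shows "norm A \<le> c * (norm B1 + norm B2 + norm B3 + norm B4)"
proof -
  define a where "a B = (\<chi> i j. \<bar>(B::real^'n^'m)$i$j\<bar>)" for B
  have "norm A \<le> norm (c *\<^sub>R (a B1 + a B2 + a B3 + a B4))"
    by (rule norm_mono_entries) (use assms in \<open>simp add: a_def\<close>)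
  also have "\<dots> = c * norm (a B1 + a B2 + a B3 + a B4)" using c by simp
  also have "\<dots> \<le> c * (norm (a B1) + norm (a B2) + norm (a B3) + norm (a B4))"
  proof (intro mult_left_mono c)
    fix x y z w :: "real^'n^'m"
    show "norm (x + y + z + w) \<le> norm x + norm y + norm z + norm w"
      using norm_triangle_ineq[of "x+y+z" w] norm_triangle_ineq[of "x+y" z] norm_triangle_ineq[of x y] by linarith
  qed
  also have "\<dots> = c * (norm B1 + norm B2 + norm B3 + norm B4)" by (simp add: a_def norm_abs_mat)
  finally show ?thesis .
qed

lemma norm_transpose: "norm (transpose (A::real^'n^'m)) = norm A"
proof -
  have "(norm (transpose A))^2 = (norm A)^2"
    unfolding normsq_entries transpose_def vec_lambda_beta by (rule sum.swap)
  thus ?thesis by (simp add: power2_eq_iff_nonneg)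
qed

lemma norm_rows: "norm (\<chi> i. norm ((A::real^'n^'m)$i)) = norm A"
  by (simp add: norm_vec_def)

lemma mv_norm: "norm ((A::real^'n^'m) *v x) \<le> norm A * norm x"
proof -
  have "norm (A *v x) \<le> norm ((norm x) *\<^sub>R (\<chi> i. norm (A$i)))"
    by (rule norm_le_componentwise_cart)
       (simp add: matrix_vector_mul_component, metis Cauchy_Schwarz_ineq2 mult.commute)
  also have "\<dots> = norm x * norm A" by (simp add: norm_rows)
  finally show ?thesis by (simp add: mult.commute)
qed

lemma mm_row: "((A::real^'n^'m) ** B) $ i = transpose B *v (A $ i)"
  unfolding vec_eq_iff matrix_matrix_mult_def matrix_vector_mult_def transpose_def
  by (simp add: mult.commute)

lemma mm_norm: "norm ((A::real^'n^'m) ** (B::real^'p^'n)) \<le> norm A * norm B"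
proof -
  have rowb: "norm ((A ** B)$i) \<le> norm B * norm (A$i)" for i
  proof -
    have "norm ((A ** B)$i) = norm (transpose B *v A$i)" by (simp only: mm_row)
    also have "\<dots> \<le> norm (transpose B) * norm (A$i)" by (rule mv_norm)
    finally show ?thesis by (simp only: norm_transpose)
  qed
  have "norm (A ** B) \<le> norm ((norm B) *\<^sub>R (\<chi> i. norm (A$i)))"
    by (rule norm_le_componentwise_cart) (use rowb in \<open>simp add: abs_mult\<close>)
  also have "\<dots> = norm A * norm B" by (simp add: norm_rows)
  finally show ?thesis .
qed

lemma proj_contr:
  fixes R :: "real^'n^'n"
  assumes "transpose R = R" "R ** R = R"
  shows "norm (R *v v) \<le> norm v"
proof -
  have "(norm (R *v v))^2 = inner (R *v v) (R *v v)" by (simp add: power2_norm_eq_inner)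
  also have "\<dots> = inner v (R *v (R *v v))" by (rule sym_inner[OF assms(1)])
  also have "\<dots> = inner v (R *v v)" by (simp add: matrix_vector_mul_assoc assms(2))
  also have "\<dots> \<le> norm v * norm (R *v v)" by (rule norm_cauchy_schwarz)
  finally have "(norm (R *v v))^2 \<le> norm v * norm (R *v v)" .
  thus ?thesis by (cases "norm (R *v v) = 0") (auto simp: power2_eq_square mult_le_cancel_right)
qed

lemma mm_contr:
  fixes R :: "real^'n^'n"
  assumes "transpose R = R" "R ** R = R"
  shows "norm ((M::real^'n^'m) ** R) \<le> norm M"
proof (rule norm_le_componentwise_cart)
  fix i
  have "norm ((M ** R)$i) = norm (transpose R *v M$i)" by (simp only: mm_row)
  also have "\<dots> \<le> norm (M$i)" unfolding assms(1) by (rule proj_contr[OF assms])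
  finally show "norm ((M ** R)$i) \<le> norm (M$i)" .
qed

lemma spec_le_frob: "spec_norm (M::real^'n^'m) \<le> norm M"
  unfolding spec_norm_def by (rule onorm_le) (rule mv_norm)

lemma frob_le_spec: "norm (M::real^'n^'n) \<le> real CARD('n) * spec_norm M"
proof -
  have s: "\<bar>M$i$j\<bar> \<le> spec_norm M" for i j unfolding spec_norm_def by (rule matrix_component_le_onorm)
  have "norm M \<le> norm ((\<chi> i j. spec_norm M) :: real^'n^'n)"
    by (rule norm_mono_entries) (simp, meson s abs_ge_self order_trans)
  also have "\<dots> = real CARD('n) * spec_norm M"
  proof -
    have "(norm ((\<chi> i j. spec_norm M) :: real^'n^'n))^2 = (real CARD('n) * spec_norm M)^2"
      unfolding normsq_entries by (simp add: power2_eq_square)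
    moreover have "spec_norm M \<ge> 0" using s[of undefined undefined] by simp
    ultimately show ?thesis by (simp add: power2_eq_iff_nonneg)
  qed
  finally show ?thesis .
qed

lemma orth_norm: "orthogonal_matrix Q \<Longrightarrow> norm (Q *v y) = norm (y::real^'n)"
proof -
  assume oQ: "orthogonal_matrix Q"
  have "inner (Q *v y) (Q *v y) = inner (transpose Q *v (Q *v y)) y"
    by (simp add: dot_lmul_matrix[symmetric] inner_commute)
  also have "\<dots> = inner y y" using oQ by (simp add: matrix_vector_mul_assoc orthogonal_matrix_def)
  finally show ?thesis by (simp add: norm_eq_sqrt_inner)
qed

lemma spec_conj:
  assumes oQ: "orthogonal_matrix (Q::real^'n^'n)"
  shows "spec_norm (Q ** M ** transpose Q) \<le> spec_norm M"
  unfolding spec_norm_def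
proof (rule onorm_le)
  fix x
  have "norm ((Q ** M ** transpose Q) *v x) = norm (M *v (transpose Q *v x))"
    using oQ by (simp add: matrix_vector_mul_assoc[symmetric] orth_norm)
  also have "\<dots> \<le> onorm ((*v) M) * norm (transpose Q *v x)"
    by (rule onorm) simp
  also have "norm (transpose Q *v x) = norm x" using oQ by (metis orth_norm orthogonal_matrix_transpose)
  finally show "norm ((Q ** M ** transpose Q) *v x) \<le> onorm ((*v) M) * norm x" .
qed


lemma blockG:
  fixes E F R :: "real^'n^'n"
  assumes EF: "E + F = mat 1" and EE: "E ** E = E" and FF: "F ** F = F"
    and Et: "transpose E = E" and Ft: "transpose F = F" and Rt: "transpose R = R" and RR: "R ** R = R"
  shows "norm (E ** R ** E) \<le> (norm (E ** R ** F))^2 + (norm (E ** R ** E))^2"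
proof -
  have "E ** R ** E = E ** R ** (E + F) ** R ** E"
    by (simp add: EF matrix_mul_assoc[symmetric] RR)
  also have "\<dots> = (E ** R ** E) ** (E ** R ** E) + (E ** R ** F) ** (F ** R ** E)"
  proof -
    have "E ** R ** (E + F) ** R ** E = E ** R ** (E ** E) ** R ** E + E ** R ** (F ** F) ** R ** E"
      by (simp add: EE FF matrix_add_ldistrib mm_add_r)
    thus ?thesis by (simp add: matrix_mul_assoc)
  qed
  finally have eq: "E ** R ** E = (E ** R ** E) ** (E ** R ** E) + (E ** R ** F) ** (F ** R ** E)" .
  have tr: "transpose (E ** R ** F) = F ** R ** E"
    by (simp add: matrix_transpose_mul Et Ft Rt matrix_mul_assoc)
  have "norm (E ** R ** E) \<le> norm ((E ** R ** E) ** (E ** R ** E)) + norm ((E ** R ** F) ** (F ** R ** E))"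
    by (subst eq) (rule norm_triangle_ineq)
  also have "\<dots> \<le> norm (E ** R ** E) * norm (E ** R ** E) + norm (E ** R ** F) * norm (F ** R ** E)"
    by (intro add_mono mm_norm)
  also have "norm (F ** R ** E) = norm (E ** R ** F)" by (metis tr norm_transpose)
  finally show ?thesis by (simp add: power2_eq_square)
qed

lemma sylv:
  fixes W R S :: "real^'n^'n" and l' :: "'n \<Rightarrow> real"
  assumes Rt: "transpose R = R" and WR: "W = W ** R" and St: "transpose S = S"
    and pos: "\<And>w. R *v w = w \<Longrightarrow> m * (norm w)^2 \<le> inner w (S *v w)"
    and rows: "\<And>i. W$i \<noteq> 0 \<Longrightarrow> l' i \<le> 0" and m: "m > 0"
  shows "m * norm W \<le> norm (W ** S - diag_mat l' ** W)"
proof -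
  have nW: "(norm W)^2 = (\<Sum>i\<in>UNIV. (norm (W$i))^2)"
    unfolding power2_norm_eq_inner by (simp add: inner_vec_def)
  have rowR: "R *v (W$i) = W$i" for i
  proof -
    have "W$i = (W ** R)$i" using WR by simp
    also have "\<dots> = R *v (W$i)" by (simp only: mm_row Rt)
    finally show ?thesis by simp
  qed
  have i1: "inner W (W ** S) \<ge> m * (norm W)^2"
  proof -
    have "inner W (W ** S) = (\<Sum>i\<in>UNIV. inner (W$i) (S *v (W$i)))"
      unfolding inner_vec_def by (simp only: mm_row St)
    also have "\<dots> \<ge> (\<Sum>i\<in>UNIV. m * (norm (W$i))^2)"
      by (intro sum_mono pos rowR)
    finally show ?thesis by (simp add: nW sum_distrib_left)
  qed
  have i2: "inner W (diag_mat l' ** W) \<le> 0"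
  proof -
    have r: "(diag_mat l' ** W)$i = l' i *\<^sub>R W$i" for i by (simp add: vec_eq_iff)
    have "inner W (diag_mat l' ** W) = (\<Sum>i\<in>UNIV. l' i * inner (W$i) (W$i))"
      unfolding inner_vec_def r by (simp add: sum_distrib_left mult_ac)
    also have "\<dots> \<le> 0"
    proof (intro sum_nonpos)
      fix i show "l' i * inner (W$i) (W$i) \<le> 0"
        using rows[of i] by (cases "W$i = 0") (auto intro: mult_nonpos_nonneg)
    qed
    finally show ?thesis .
  qed
  have "m * (norm W)^2 \<le> inner W (W ** S - diag_mat l' ** W)"
    using i1 i2 by (simp add: inner_diff_right)
  also have "\<dots> \<le> norm W * norm (W ** S - diag_mat l' ** W)" by (rule norm_cauchy_schwarz)
  finally have "norm W * (m * norm W) \<le> norm W * norm (W ** S - diag_mat l' ** W)"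
    by (simp add: power2_eq_square mult_ac)
  thus ?thesis by (cases "W = 0") (auto simp: m)
qed


lemma mm_neg_l: "(- (A::real^'n^'m)) ** B = - (A ** B)"
  by (vector matrix_matrix_mult_def sum_negf)
lemma mm_neg_r: "(A::real^'n^'m) ** (- B) = - (A ** B)"
  by (vector matrix_matrix_mult_def sum_negf)

lemma fr1:
  fixes li lj p h r :: real
  assumes "li - lj \<noteq> 0" "(li - lj) * p = - h + r"
  shows "li * p + h - lj / (lj - li) * h = li * r / (li - lj)"
proof -
  have "lj - li \<noteq> 0" using assms(1) by simp
  have p: "p = (r - h) / (li - lj)" using assms by (simp add: field_simps)
  show ?thesis unfolding p using assms(1) \<open>lj - li \<noteq> 0\<close>
    by (simp add: divide_simps) (simp add: algebra_simps)
qed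

lemma fr2:
  fixes li lj p h r :: real
  assumes "li - lj \<noteq> 0" "(li - lj) * p = h + r"
  shows "li * p - li / (li - lj) * h = li * r / (li - lj)"
proof -
  have p: "p = (r + h) / (li - lj)" using assms by (simp add: field_simps)
  show ?thesis unfolding p using assms(1)
    by (simp add: divide_simps) (simp add: algebra_simps)
qed

lemma core:
  fixes l :: "'n::finite \<Rightarrow> real" and H Pr P N :: "real^'n^'n" and m \<delta> L :: real
  assumes l0: "\<And>i. l i \<noteq> 0" and dl: "\<And>i. \<delta> \<le> \<bar>l i\<bar>" and Ll: "\<And>i. \<bar>l i\<bar> \<le> L"
    and dpos: "\<delta> > 0" and mpos: "m > 0"
    and Hs: "transpose H = H" and Hsm1: "norm H \<le> m/2" and Hsm2: "16 * norm H \<le> \<delta>"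
    and Prt: "transpose Pr = Pr" and Prr: "Pr ** Pr = Pr"
    and AP: "(diag_mat l + H) ** Pr = P" and PA: "Pr ** (diag_mat l + H) = P"
    and NP: "N = P - (diag_mat l + H)"
    and posP: "\<And>w. Pr *v w = w \<Longrightarrow> m * (norm w)^2 \<le> inner w (P *v w)"
    and posN: "\<And>w. (mat 1 - Pr) *v w = w \<Longrightarrow> m * (norm w)^2 \<le> inner w (N *v w)"
  shows "norm (P - diag_mat (\<lambda>i. max (l i) 0) - hadamard (Omega l) H)
           \<le> ((1 + L + L / \<delta>) * (2 / \<delta>) * (12 + 4 / m)) * norm (off_block l H) * norm H"
proof -
  define Dl where "Dl = diag_mat l"
  define A where "A = Dl + H"
  define Ep where "Ep = diag_mat (\<lambda>i. if 0 < l i then 1 else (0::real))"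
  define En where "En = diag_mat (\<lambda>i. if l i < 0 then 1 else (0::real))"
  define Pc where "Pc = mat 1 - Pr"
  have AP': "A ** Pr = P" and PA': "Pr ** A = P" using AP PA by (simp_all add: A_def Dl_def)
  have At: "transpose A = A" by (simp add: A_def Dl_def transpose_add Hs)
  have Pt: "transpose P = P" using AP' PA' At Prt by (metis matrix_transpose_mul)
  have PrP: "Pr ** P = P" using PA' Prr by (metis matrix_mul_assoc)
  have Pct: "transpose Pc = Pc" by (simp add: Pc_def transpose_diff Prt)
  have Pcc: "Pc ** Pc = Pc" by (simp add: Pc_def mm_diff_l mm_diff_r Prr)
  have APc: "A ** Pc = A - P" by (simp add: Pc_def mm_diff_l AP')
  have PcA: "Pc ** A = A - P" by (simp add: Pc_def mm_diff_r PA')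
  have N': "N = - (A ** Pc)" unfolding APc by (simp add: NP A_def Dl_def)
  have Nt: "transpose N = N" by (simp add: NP transpose_diff Pt At[unfolded A_def Dl_def])
  have EnEp: "En + Ep = mat 1"
  proof -
    have "(\<lambda>k. (if l k < 0 then 1 else 0) + (if 0 < l k then 1 else (0::real))) = (\<lambda>k. 1)"
    proof
      fix k show "(if l k < 0 then 1 else 0) + (if 0 < l k then 1 else (0::real)) = 1"
        using l0[of k] by (cases "l k < 0") auto
    qed
    thus ?thesis by (simp add: En_def Ep_def diag_add diag_one[symmetric])
  qed
  have EnEn: "En ** En = En" and EpEp: "Ep ** Ep = Ep" by (simp_all add: En_def Ep_def diag_diag if_distrib cong: if_cong)
  have DEn: "Dl ** En = En ** Dl" and DEp: "Dl ** Ep = Ep ** Dl"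
    by (simp_all add: Dl_def En_def Ep_def diag_diag mult.commute)
  have Ent: "transpose En = En" and Ept: "transpose Ep = Ep" by (simp_all add: En_def Ep_def)
  have maskH1: "norm (En ** H) \<le> norm H" by (rule norm_mono_entries) (simp add: En_def)
  have maskH2: "norm (Ep ** H) \<le> norm H" by (rule norm_mono_entries) (simp add: Ep_def)
  have h0: "norm H \<ge> 0" by simp
  define W1 where "W1 = En ** Pr"
  define W2 where "W2 = Ep ** Pc"
  have W1b: "m * norm W1 \<le> norm H"
  proof -
    have "m * norm W1 \<le> norm (W1 ** P - diag_mat l ** W1)"
    proof (rule sylv[OF Prt _ Pt posP _ mpos])
      show "W1 = W1 ** Pr" by (simp add: W1_def matrix_mul_assoc[symmetric] Prr)
    next
      fix i assume "W1$i \<noteq> 0"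
      then obtain j where "W1$i$j \<noteq> 0" by (auto simp: vec_eq_iff)
      thus "l i \<le> 0" by (simp add: W1_def En_def split: if_splits)
    qed
    also have "W1 ** P - diag_mat l ** W1 = En ** (H ** Pr)"
    proof -
      have "W1 ** P = En ** P" by (simp add: W1_def matrix_mul_assoc[symmetric] PrP)
      also have "\<dots> = En ** (A ** Pr)" by (simp add: AP')
      also have "\<dots> = En ** (Dl ** Pr) + En ** (H ** Pr)" by (simp add: A_def mm_add_r matrix_add_ldistrib)
      finally have "W1 ** P = En ** (Dl ** Pr) + En ** (H ** Pr)" .
      moreover have "diag_mat l ** W1 = En ** (Dl ** Pr)"
        by (simp add: W1_def matrix_mul_assoc DEn[unfolded Dl_def] Dl_def)
      ultimately show ?thesis by simp
    qed
    also have "norm (En ** (H ** Pr)) \<le> norm (En ** H)"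
      unfolding matrix_mul_assoc by (rule mm_contr[OF Prt Prr])
    finally show ?thesis using maskH1 by simp
  qed
  have W2b: "m * norm W2 \<le> norm H"
  proof -
    have "m * norm W2 \<le> norm (W2 ** N - diag_mat (\<lambda>i. - l i) ** W2)"
    proof (rule sylv[OF Pct _ Nt _ _ mpos])
      show "W2 = W2 ** Pc" by (simp add: W2_def matrix_mul_assoc[symmetric] Pcc)
    next
      fix w assume "Pc *v w = w" thus "m * (norm w)^2 \<le> inner w (N *v w)" using posN by (simp add: Pc_def)
    next
      fix i assume "W2$i \<noteq> 0"
      then obtain j where "W2$i$j \<noteq> 0" by (auto simp: vec_eq_iff)
      thus "- l i \<le> 0" by (simp add: W2_def Ep_def split: if_splits)
    qed
    also have "W2 ** N - diag_mat (\<lambda>i. - l i) ** W2 = - (Ep ** (H ** Pc))"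
    proof -
      have PcN: "Pc ** N = N"
      proof -
        have "Pc ** N = - (Pc ** A ** Pc)" by (simp add: N' mm_neg_r matrix_mul_assoc)
        also have "Pc ** A ** Pc = A ** Pc ** Pc" by (simp add: PcA APc)
        also have "\<dots> = A ** Pc" by (simp add: matrix_mul_assoc[symmetric] Pcc)
        finally show ?thesis by (simp add: N')
      qed
      have "W2 ** N = Ep ** N" by (simp add: W2_def matrix_mul_assoc[symmetric] PcN)
      also have "\<dots> = - (Ep ** (A ** Pc))" by (simp add: N' mm_neg_r)
      also have "\<dots> = - (Ep ** (Dl ** Pc)) - Ep ** (H ** Pc)" by (simp add: A_def mm_add_r matrix_add_ldistrib)
      finally have "W2 ** N = - (Ep ** (Dl ** Pc)) - Ep ** (H ** Pc)" .
      moreover have "diag_mat (\<lambda>i. - l i) ** W2 = - (Ep ** (Dl ** Pc))"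
      proof -
        have "diag_mat (\<lambda>i. - l i) = - Dl" by (vector Dl_def diag_mat_def)
        thus ?thesis by (simp add: W2_def mm_neg_l matrix_mul_assoc DEp)
      qed
      ultimately show ?thesis by simp
    qed
    also have "norm (- (Ep ** (H ** Pc))) \<le> norm (Ep ** H)"
      unfolding norm_minus_cancel matrix_mul_assoc by (rule mm_contr[OF Pct Pcc])
    finally show ?thesis using maskH2 by simp
  qed

  have W1s: "norm W1 \<le> norm H / m" using W1b mpos by (simp add: field_simps)
  have W2s: "norm W2 \<le> norm H / m" using W2b mpos by (simp add: field_simps)
  have hm: "norm H / m \<le> 1/2" using Hsm1 mpos by (simp add: field_simps)
  define X where "X = En ** Pr ** Ep"
  define P22 where "P22 = En ** Pr ** En"
  define Y where "Y = Ep ** Pc ** Ep"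
  define Z where "Z = Ep ** Pc ** En"
  have Prs: "Pr$i$j = Pr$j$i" for i j
  proof -
    have "(transpose Pr)$i$j = Pr$j$i" by (simp add: transpose_def)
    thus ?thesis using Prt by simp
  qed
  have Xe: "X$i$j = (if l i < 0 \<and> 0 < l j then Pr$i$j else 0)" for i j by (simp add: X_def En_def Ep_def)
  have P22e: "P22$i$j = (if l i < 0 \<and> l j < 0 then Pr$i$j else 0)" for i j by (simp add: P22_def En_def)
  have Pce: "Pc$i$j = (if i = j then 1 else 0) - Pr$i$j" for i j by (simp add: Pc_def mat_def)
  have Ye: "Y$i$j = (if 0 < l i \<and> 0 < l j then (if i = j then 1 else 0) - Pr$i$j else 0)" for i j
    by (simp add: Y_def Ep_def Pce)
  have Ze: "Z$i$j = (if 0 < l i \<and> l j < 0 then (if i = j then 1 else 0) - Pr$i$j else 0)" for i j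
    by (simp add: Z_def Ep_def En_def Pce)
  have W1e: "W1$i$j = (if l i < 0 then Pr$i$j else 0)" for i j by (simp add: W1_def En_def)
  have W2e: "W2$i$j = (if 0 < l i then (if i = j then 1 else 0) - Pr$i$j else 0)" for i j by (simp add: W2_def Ep_def Pce)
  have nXW: "norm X \<le> norm W1" by (rule norm_mono_entries) (simp add: Xe W1e)
  have nPW: "norm P22 \<le> norm W1" by (rule norm_mono_entries) (simp add: P22e W1e)
  have nYW: "norm Y \<le> norm W2" by (rule norm_mono_entries) (simp add: Ye W2e)
  have nZX: "norm Z \<le> norm X"
  proof -
    have "norm Z \<le> norm (transpose X)"
    proof (rule norm_mono_entries)
      fix i j
      show "\<bar>Z$i$j\<bar> \<le> \<bar>transpose X $i$j\<bar>"
      proof (cases "0 < l i \<and> l j < 0")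
        case True
        hence "i \<noteq> j" by auto
        thus ?thesis using True by (simp add: Ze transpose_def Xe Prs[of i j])
      next
        case False thus ?thesis using Ze[of i j] by auto
      qed
    qed
    thus ?thesis by (simp add: norm_transpose)
  qed
  have bG1: "norm P22 \<le> (norm X)^2 + (norm P22)^2"
    unfolding P22_def X_def by (rule blockG[OF EnEp EnEn EpEp Ent Ept Prt Prr])
  have bG2: "norm Y \<le> (norm Z)^2 + (norm Y)^2"
    unfolding Y_def Z_def by (rule blockG[OF _ EpEp EnEn Ept Ent Pct Pcc]) (simp add: EnEp[unfolded add.commute[of En]])
  define x where "x = norm X"
  define h where "h = norm H"
  define ho where "ho = norm (off_block l H)"
  have x0: "x \<ge> 0" and h0': "h \<ge> 0" by (simp_all add: x_def h_def)
  have xh: "x \<le> h / m" using nXW W1s by (simp add: x_def h_def)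
  have xhalf: "x \<le> 1/2" using xh hm unfolding h_def by linarith
  have pb: "norm P22 \<le> 2 * x^2"
  proof -
    have p12: "norm P22 \<le> 1/2" using nPW W1s hm by linarith
    have "norm P22 * norm P22 \<le> norm P22 * (1/2)" by (rule mult_left_mono[OF p12]) simp
    thus ?thesis using bG1 by (simp add: x_def power2_eq_square)
  qed
  have yb: "norm Y \<le> 2 * x^2"
  proof -
    have y12: "norm Y \<le> 1/2" using nYW W2s hm by linarith
    have "norm Y * norm Y \<le> norm Y * (1/2)" by (rule mult_left_mono[OF y12]) simp
    moreover have "(norm Z)^2 \<le> x^2" unfolding x_def by (rule power_mono[OF nZX]) simp
    ultimately show ?thesis using bG2 by (simp add: power2_eq_square)
  qed
  define Dt where "Dt = Pr - Ep"
  define R where "R = Dt ** H - H ** Dt"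
  have PrEp: "Pr = Ep + Dt" by (simp add: Dt_def)
  have HPr: "(H ** Pr)$i$j = H$i$j * (if 0 < l j then 1 else 0) + (H ** Dt)$i$j" for i j
    unfolding PrEp matrix_add_ldistrib by (simp add: Ep_def)
  have PrH: "(Pr ** H)$i$j = (if 0 < l i then 1 else 0) * H$i$j + (Dt ** H)$i$j" for i j
    unfolding PrEp mm_add_r by (simp add: Ep_def)
  have Ae: "(A ** Pr)$i$j = l i * Pr$i$j + (H ** Pr)$i$j" for i j
    by (simp add: A_def Dl_def mm_add_r)
  have Ae2: "(Pr ** A)$i$j = Pr$i$j * l j + (Pr ** H)$i$j" for i j
    by (simp add: A_def Dl_def matrix_add_ldistrib)
  have e3: "(l i - l j) * Pr$i$j = ((if 0 < l i then 1 else 0) - (if 0 < l j then 1 else 0)) * H$i$j + R$i$j" for i j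
  proof -
    have "(A ** Pr)$i$j = (Pr ** A)$i$j" using AP' PA' by simp
    hence "l i * Pr$i$j + (H ** Pr)$i$j = Pr$i$j * l j + (Pr ** H)$i$j" by (simp only: Ae Ae2)
    thus ?thesis unfolding HPr PrH R_def by (simp add: algebra_simps)
  qed
  have Pe: "P$i$j = l i * Pr$i$j + H$i$j * (if 0 < l j then 1 else 0) + (H ** Dt)$i$j" for i j
    using Ae[of i j] AP' HPr[of i j] by simp
  define d where "d = norm Dt"
  have nR: "norm R \<le> 2 * d * h"
  proof -
    have "norm R \<le> norm (Dt ** H) + norm (H ** Dt)" unfolding R_def by (rule norm_triangle_ineq4)
    also have "\<dots> \<le> d * h + h * d" unfolding d_def h_def by (intro add_mono mm_norm)
    finally show ?thesis by simp
  qed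
  have L0: "L \<ge> 0" using Ll[of undefined] by simp
  have gap: "\<delta> \<le> \<bar>l i - l j\<bar>" if "(l i < 0 \<and> 0 < l j) \<or> (0 < l i \<and> l j < 0)" for i j
    using dl[of i] dl[of j] that by auto
  have nX2: "norm X \<le> (1/\<delta>) * (norm (off_block l H) + norm R + norm (0::real^'n^'n) + norm (0::real^'n^'n))"
  proof (rule dominate4)
    fix i j
    show "\<bar>X$i$j\<bar> \<le> 1/\<delta> * (\<bar>off_block l H $i$j\<bar> + \<bar>R$i$j\<bar> + \<bar>(0::real^'n^'n)$i$j\<bar> + \<bar>(0::real^'n^'n)$i$j\<bar>)"
    proof (cases "l i < 0 \<and> 0 < l j")
      case True
      have e: "(l i - l j) * Pr$i$j = - H$i$j + R$i$j" using e3[of i j] True by simp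
      have g: "\<delta> \<le> \<bar>l i - l j\<bar>" using gap True by blast
      have "\<delta> * \<bar>Pr$i$j\<bar> \<le> \<bar>l i - l j\<bar> * \<bar>Pr$i$j\<bar>" by (rule mult_right_mono[OF g]) simp
      also have "\<dots> = \<bar>- H$i$j + R$i$j\<bar>" using e by (metis abs_mult)
      also have "\<dots> \<le> \<bar>H$i$j\<bar> + \<bar>R$i$j\<bar>" by simp
      finally have "\<bar>Pr$i$j\<bar> \<le> (\<bar>H$i$j\<bar> + \<bar>R$i$j\<bar>) / \<delta>" using dpos by (simp add: field_simps)
      thus ?thesis using True by (simp add: Xe off_block_def)
    next
      case False thus ?thesis using Xe[of i j] dpos by auto
    qed
  qed (use dpos in simp)
  have Dte: "Dt$i$j = Pr$i$j - (if i = j then (if 0 < l i then 1 else 0) else 0)" for i j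
    by (simp add: Dt_def Ep_def diag_mat_def)
  have nD: "norm Dt \<le> 1 * (norm Y + norm P22 + norm X + norm (transpose X))"
  proof (rule dominate4)
    fix i j
    show "\<bar>Dt$i$j\<bar> \<le> 1 * (\<bar>Y$i$j\<bar> + \<bar>P22$i$j\<bar> + \<bar>X$i$j\<bar> + \<bar>transpose X$i$j\<bar>)"
    proof -
      consider "0 < l i \<and> 0 < l j" | "l i < 0 \<and> l j < 0" | "l i < 0 \<and> 0 < l j" | "0 < l i \<and> l j < 0"
        using l0[of i] l0[of j] by (meson linorder_neqE_linordered_idom)
      thus ?thesis
      proof cases
        case 1 thus ?thesis by (cases "i = j") (simp_all add: Dte Ye abs_minus_commute)
      next
        case 2 thus ?thesis by (simp add: Dte P22e)
      next
        case 3 hence "i \<noteq> j" by auto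
        thus ?thesis using 3 by (simp add: Dte Xe)
      next
        case 4 hence "i \<noteq> j" by auto
        thus ?thesis using 4 by (simp add: Dte Xe transpose_def Prs[of i j])
      qed
    qed
  qed simp
  have db: "d \<le> 4 * x"
  proof -
    have "d \<le> 2 * x^2 + 2 * x^2 + x + x" using nD yb pb by (simp add: d_def x_def norm_transpose)
    moreover have "x^2 \<le> x * (1/2)" unfolding power2_eq_square by (rule mult_left_mono[OF xhalf x0])
    ultimately show ?thesis by simp
  qed
  have rb: "norm R \<le> 8 * x * h"
  proof -
    have "2 * d * h \<le> 2 * (4 * x) * h" using db h0' by (simp add: mult_right_mono)
    thus ?thesis using nR by (simp add: mult_ac)
  qed
  have xb: "x \<le> 2 * ho / \<delta>"
  proof -
    have "\<delta> * x \<le> ho + norm R" using nX2 dpos by (simp add: x_def ho_def field_simps)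
    moreover have "x * (16 * h) \<le> x * \<delta>" using Hsm2 x0 by (simp add: h_def mult_left_mono)
    ultimately have "\<delta> * x \<le> 2 * ho" using rb by (simp add: algebra_simps)
    thus ?thesis using dpos by (simp add: field_simps)
  qed
  define Err where "Err = P - diag_mat (\<lambda>i. max (l i) 0) - hadamard (Omega l) H"
  define c where "c = 1 + L + L / \<delta>"
  have c0: "L + L / \<delta> \<ge> 0" using L0 dpos by simp
  have Ld: "L / \<delta> \<ge> 0" using L0 dpos by simp
  have fracb: "\<bar>l i * r / (l i - l j)\<bar> \<le> (L + L / \<delta>) * \<bar>r\<bar>" if "\<delta> \<le> \<bar>l i - l j\<bar>" for i j and r :: real
  proof -
    have "\<bar>l i * r / (l i - l j)\<bar> = \<bar>l i\<bar> * \<bar>r\<bar> / \<bar>l i - l j\<bar>" by (simp add: abs_mult)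
    also have "\<dots> \<le> L * \<bar>r\<bar> / \<delta>"
      by (rule frac_le) (use Ll L0 dpos that in \<open>auto intro: mult_right_mono\<close>)
    also have "\<dots> \<le> (L + L / \<delta>) * \<bar>r\<bar>"
    proof -
      have "L * \<bar>r\<bar> / \<delta> = (L / \<delta>) * \<bar>r\<bar>" by simp
      also have "\<dots> \<le> (L + L / \<delta>) * \<bar>r\<bar>" using L0 by (intro mult_right_mono) simp_all
      finally show ?thesis .
    qed
    finally show ?thesis .
  qed
  have Erre: "Err$i$j = l i * Pr$i$j + H$i$j * (if 0 < l j then 1 else 0) + (H ** Dt)$i$j
      - (if i = j then max (l i) 0 else 0) - Omega l $i$j * H$i$j" for i j
    by (simp add: Err_def Pe diag_mat_def hadamard_def)
  have nE: "norm Err \<le> c * (norm (H ** Dt) + norm Y + norm P22 + norm R)"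
  proof (rule dominate4)
    fix i j
    have F: "\<bar>Err$i$j - (H ** Dt)$i$j\<bar> \<le> (L + L / \<delta>) * (\<bar>Y$i$j\<bar> + \<bar>P22$i$j\<bar> + \<bar>R$i$j\<bar>)"
    proof -
      consider "0 < l i \<and> 0 < l j" | "l i < 0 \<and> l j < 0" | "l i < 0 \<and> 0 < l j" | "0 < l i \<and> l j < 0"
        using l0[of i] l0[of j] by (meson linorder_neqE_linordered_idom)
      thus ?thesis
      proof cases
        case 1
        have "Err$i$j - (H ** Dt)$i$j = - l i * Y$i$j" using 1 by (cases "i = j") (simp_all add: Erre Ye Omega_def algebra_simps)
        hence "\<bar>Err$i$j - (H ** Dt)$i$j\<bar> = \<bar>l i\<bar> * \<bar>Y$i$j\<bar>" by (simp add: abs_mult)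
        also have "\<dots> \<le> (L + L / \<delta>) * \<bar>Y$i$j\<bar>" using Ll[of i] Ld by (intro mult_right_mono) auto
        finally show ?thesis using c0 by (smt (verit) abs_ge_zero mult_left_mono)
      next
        case 2
        have "Err$i$j - (H ** Dt)$i$j = l i * P22$i$j" using 2 by (cases "i = j") (simp_all add: Erre P22e Omega_def)
        hence "\<bar>Err$i$j - (H ** Dt)$i$j\<bar> = \<bar>l i\<bar> * \<bar>P22$i$j\<bar>" by (simp add: abs_mult)
        also have "\<dots> \<le> (L + L / \<delta>) * \<bar>P22$i$j\<bar>" using Ll[of i] Ld by (intro mult_right_mono) auto
        finally show ?thesis using c0 by (smt (verit) abs_ge_zero mult_left_mono)
      next
        case 3
        hence ij: "i \<noteq> j" by auto
        have e: "(l i - l j) * Pr$i$j = - H$i$j + R$i$j" using e3[of i j] 3 by simp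
        have nz: "l i - l j \<noteq> 0" using 3 by simp
        have "Err$i$j - (H ** Dt)$i$j = l i * Pr$i$j + H$i$j - l j / (l j - l i) * H$i$j"
          using 3 ij by (simp add: Erre Omega_def)
        also have "\<dots> = l i * R$i$j / (l i - l j)" by (rule fr1[OF nz e])
        finally have "\<bar>Err$i$j - (H ** Dt)$i$j\<bar> \<le> (L + L / \<delta>) * \<bar>R$i$j\<bar>"
          using fracb[of i j "R$i$j"] gap[of i j] 3 by simp
        thus ?thesis using c0 by (smt (verit) abs_ge_zero mult_left_mono)
      next
        case 4
        hence ij: "i \<noteq> j" by auto
        have e: "(l i - l j) * Pr$i$j = H$i$j + R$i$j" using e3[of i j] 4 by simp
        have nz: "l i - l j \<noteq> 0" using 4 by simp
        have "Err$i$j - (H ** Dt)$i$j = l i * Pr$i$j - l i / (l i - l j) * H$i$j"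
          using 4 ij by (simp add: Erre Omega_def)
        also have "\<dots> = l i * R$i$j / (l i - l j)" by (rule fr2[OF nz e])
        finally have "\<bar>Err$i$j - (H ** Dt)$i$j\<bar> \<le> (L + L / \<delta>) * \<bar>R$i$j\<bar>"
          using fracb[of i j "R$i$j"] gap[of i j] 4 by simp
        thus ?thesis using c0 by (smt (verit) abs_ge_zero mult_left_mono)
      qed
    qed
    have "\<bar>Err$i$j\<bar> \<le> \<bar>(H ** Dt)$i$j\<bar> + \<bar>Err$i$j - (H ** Dt)$i$j\<bar>" by linarith
    also have "\<dots> \<le> \<bar>(H ** Dt)$i$j\<bar> + (L + L / \<delta>) * (\<bar>Y$i$j\<bar> + \<bar>P22$i$j\<bar> + \<bar>R$i$j\<bar>)" using F by linarith
    also have "\<dots> \<le> c * (\<bar>(H ** Dt)$i$j\<bar> + \<bar>Y$i$j\<bar> + \<bar>P22$i$j\<bar> + \<bar>R$i$j\<bar>)"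
    proof -
      have aux: "0 \<le> (L + L / \<delta>) * \<bar>(H ** Dt)$i$j\<bar>" using c0 by simp
      show ?thesis unfolding c_def using aux abs_ge_zero[of "P22$i$j"] abs_ge_zero[of "R$i$j"] abs_ge_zero[of "Y$i$j"]
        by (simp add: algebra_simps)
    qed
    finally show "\<bar>Err$i$j\<bar> \<le> c * (\<bar>(H ** Dt)$i$j\<bar> + \<bar>Y$i$j\<bar> + \<bar>P22$i$j\<bar> + \<bar>R$i$j\<bar>)" .
  next
    show "c \<ge> 0" using c0 by (simp add: c_def)
  qed
  have cpos: "c \<ge> 0" using c0 by (simp add: c_def)
  have "norm (H ** Dt) + norm Y + norm P22 + norm R \<le> h * (4 * x) + 2 * x^2 + 2 * x^2 + 8 * x * h"
  proof -
    have "norm (H ** Dt) \<le> h * d" unfolding h_def d_def by (rule mm_norm)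
    also have "\<dots> \<le> h * (4 * x)" using db h0' by (rule mult_left_mono)
    finally show ?thesis using yb pb rb by linarith
  qed
  also have "\<dots> \<le> x * h * (12 + 4 / m)"
  proof -
    have q: "x^2 \<le> x * (h / m)" unfolding power2_eq_square by (rule mult_left_mono[OF xh x0])
    have e: "x * h * (12 + 4 / m) = 12 * x * h + 4 * (x * (h / m))" by (simp add: algebra_simps)
    have e2: "h * (4 * x) + 2 * x^2 + 2 * x^2 + 8 * x * h = 12 * x * h + 4 * x^2" by (simp add: algebra_simps)
    show ?thesis unfolding e e2 using q by linarith
  qed
  also have "\<dots> \<le> (2 * ho / \<delta>) * h * (12 + 4 / m)"
    using xb h0' mpos by (intro mult_right_mono) simp_all
  finally have "norm Err \<le> c * ((2 * ho / \<delta>) * h * (12 + 4 / m))"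
    using nE cpos by (meson mult_left_mono order_trans)
  moreover have "c * ((2 * ho / \<delta>) * h * (12 + 4 / m)) = (c * (2 / \<delta>) * (12 + 4 / m)) * ho * h"
    by (simp add: mult_ac)
  ultimately show ?thesis by (simp only: Err_def c_def ho_def h_def)
qed


lemma sp_pos_bound:
  fixes V :: "real^'n^'n"
  assumes oV: "orthogonal_matrix V" and ea: "\<And>k. e k = 0 \<or> m \<le> a k" and w: "sp V e *v w = w"
  shows "m * (norm w)^2 \<le> inner w (sp V a *v w)"
proof -
  define y where "y = transpose V *v w"
  have VtV: "transpose V ** V = mat 1" using oV by (simp add: orthogonal_matrix_def)
  have "y = transpose V *v (sp V e *v w)" using w by (simp add: y_def)
  also have "\<dots> = (transpose V ** V) *v (diag_mat e *v y)"
    by (simp add: y_def sp_def matrix_vector_mul_assoc matrix_mul_assoc del: transpose_matrix_vector)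
  finally have yy: "y = diag_mat e *v y" by (simp add: VtV)
  have yk: "y $ k = e k * y $ k" for k using yy by (metis diag_vec)
  have "m * (norm w)^2 = (\<Sum>k\<in>UNIV. m * (y $ k)^2)"
    by (simp add: sp_normsq[OF oV] y_def sum_distrib_left)
  also have "\<dots> \<le> (\<Sum>k\<in>UNIV. a k * (y $ k)^2)"
  proof (rule sum_mono)
    fix k show "m * (y $ k)^2 \<le> a k * (y $ k)^2"
    proof (cases "e k = 0")
      case True hence "y $ k = 0" using yk[of k] by simp
      thus ?thesis by simp
    next
      case False hence "m \<le> a k" using ea by blast
      thus ?thesis by (simp add: mult_right_mono)
    qed
  qed
  also have "\<dots> = inner w (sp V a *v w)" by (simp add: sp_quad[OF oV] y_def)
  finally show ?thesis .
qed

lemma eig_bound: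
  fixes V :: "real^'n^'n" and l :: "'n \<Rightarrow> real"
  assumes oV: "orthogonal_matrix V" and dec: "diag_mat l + H = sp V \<mu>" and dl: "\<And>i. \<delta> \<le> \<bar>l i\<bar>" and d0: "\<delta> \<ge> 0"
  shows "\<delta> - norm H \<le> \<bar>\<mu> k\<bar>"
proof -
  define c where "c = column k V"
  have nc: "norm c = 1" using oV unfolding c_def orthogonal_matrix_orthonormal_columns by blast
  have "(diag_mat l + H) *v c = \<mu> k *\<^sub>R c" unfolding dec c_def by (rule sp_col[OF oV])
  hence n: "norm ((diag_mat l + H) *v c) = \<bar>\<mu> k\<bar>" using nc by simp
  have "norm (\<delta> *\<^sub>R c) \<le> norm (diag_mat l *v c)"
    by (rule norm_le_componentwise_cart) (use dl d0 in \<open>simp add: abs_mult mult_right_mono\<close>)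
  hence dD: "\<delta> \<le> norm (diag_mat l *v c)" using nc d0 by simp
  have hH: "norm (H *v c) \<le> norm H" using mv_norm[of H c] nc by simp
  have "(diag_mat l + H) *v c = diag_mat l *v c + H *v c"
    by (simp add: matrix_vector_mult_add_rdistrib)
  hence "norm (diag_mat l *v c) \<le> norm ((diag_mat l + H) *v c) + norm (H *v c)"
    by (metis add_diff_cancel_right' norm_triangle_ineq4 order_trans norm_diff_ineq add.commute
        diff_add_cancel norm_triangle_ineq)
  thus ?thesis using n dD hH by linarith
qed


lemma inv_nz:
  fixes l :: "'n::finite \<Rightarrow> real"
  assumes inv: "invertible Z" and oQ: "orthogonal_matrix Q" and Zd: "Z = Q ** diag_mat l ** transpose Q"
  shows "l i \<noteq> 0"
proof
  assume li: "l i = 0"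
  obtain Z' where Z': "Z' ** Z = mat 1" using inv by (auto simp: invertible_def)
  define v where "v = Q *v axis i (1::real)"
  have nv: "norm v = 1" using orth_norm[OF oQ] by (simp add: v_def)
  have dz: "diag_mat l *v axis i (1::real) = 0" using li by (simp add: vec_eq_iff axis_def)
  have "Z *v v = Q *v (diag_mat l *v ((transpose Q ** Q) *v axis i 1))"
    by (simp add: Zd v_def matrix_vector_mul_assoc matrix_mul_assoc del: transpose_matrix_vector)
  also have "\<dots> = 0" using oQ dz by (simp add: orthogonal_matrix_def)
  finally have "Z *v v = 0" .
  hence "(Z' ** Z) *v v = 0" by (simp add: matrix_vector_mul_assoc[symmetric])
  hence "v = 0" using Z' by simp
  thus False using nv by simp
qed

theorem theorem2:
  fixes l :: "'n::{finite,linorder} \<Rightarrow> real" and Z Q :: "((real, 'n) vec, 'n) vec"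
  assumes "transpose Z = Z"
    and "invertible Z"
    and "orthogonal_matrix Q"
    and "Z = Q ** diag_mat l ** transpose Q"
    and "\<And>i j. i \<le> j \<Longrightarrow> l j \<le> l i"
  shows "\<exists>C_EB > 0. \<exists>\<alpha>_EB > 0. \<forall>H.
           transpose H = H \<and> spec_norm H \<le> C_EB \<longrightarrow>
           spec_norm (proj_psd (Z + H) - proj_psd Z
                      - Q ** hadamard (Omega l) (transpose Q ** H ** Q) ** transpose Q)
             \<le> \<alpha>_EB * spec_norm (off_block l (transpose Q ** H ** Q)) * spec_norm H"
proof -
  note oQ = assms(3) and Zd = assms(4)
  have l0: "\<And>i. l i \<noteq> 0" using inv_nz[OF assms(2) oQ Zd] by blast
  define \<delta> where "\<delta> = Min (range (\<lambda>i. \<bar>l i\<bar>))"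
  define L where "L = (\<Sum>i\<in>UNIV. \<bar>l i\<bar>)"
  have dl: "\<And>i. \<delta> \<le> \<bar>l i\<bar>" unfolding \<delta>_def by (rule Min_le) auto
  have dpos: "\<delta> > 0"
  proof -
    have "\<delta> \<in> range (\<lambda>i. \<bar>l i\<bar>)" unfolding \<delta>_def by (rule Min_in) auto
    thus ?thesis using l0 by auto
  qed
  have Ll: "\<And>i. \<bar>l i\<bar> \<le> L" unfolding L_def by (rule member_le_sum) auto
  have L0: "L \<ge> 0" using Ll[of undefined] by simp
  define m where "m = \<delta> / 2"
  have mpos: "m > 0" using dpos by (simp add: m_def)
  define K where "K = (1 + L + L / \<delta>) * (2 / \<delta>) * (12 + 4 / m)"
  have Kpos: "K > 0" unfolding K_def using L0 dpos mpos by (intro mult_pos_pos) (simp_all add: add_pos_nonneg)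
  define n where "n = real CARD('n)"
  have npos: "n > 0" by (simp add: n_def)
  define C where "C = \<delta> / (16 * n)"
  have Cpos: "C > 0" using dpos npos by (simp add: C_def)
  have main: "spec_norm (proj_psd (Z + H) - proj_psd Z
                      - Q ** hadamard (Omega l) (transpose Q ** H ** Q) ** transpose Q)
             \<le> (K * n^2) * spec_norm (off_block l (transpose Q ** H ** Q)) * spec_norm H"
    if Hs: "transpose H = H" and HC: "spec_norm H \<le> C" for H
  proof -
    define Ht where "Ht = transpose Q ** H ** Q"
    have QQt: "Q ** transpose Q = mat 1" and QtQ: "transpose Q ** Q = mat 1" using oQ by (auto simp: orthogonal_matrix_def)
    have Hts: "transpose Ht = Ht" by (simp add: Ht_def matrix_transpose_mul Hs matrix_mul_assoc)
    have sHt: "spec_norm Ht \<le> spec_norm H"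
      using spec_conj[of "transpose Q" H] oQ by (simp add: Ht_def)
    have nHt: "norm Ht \<le> n * spec_norm H"
      using frob_le_spec[of Ht] sHt npos by (simp add: n_def) (meson mult_left_mono of_nat_0_le_iff order_trans)
    have nHt2: "norm Ht \<le> \<delta> / 16"
    proof -
      have "n * spec_norm H \<le> n * C" using HC npos by simp
      also have "\<dots> = \<delta> / 16" using npos by (simp add: C_def)
      finally show ?thesis using nHt by linarith
    qed
    have symA: "transpose (diag_mat l + Ht) = diag_mat l + Ht" by (simp add: transpose_add Hts)
    obtain V \<mu> where oV: "orthogonal_matrix V" and dec0: "diag_mat l + Ht = V ** diag_mat \<mu> ** transpose V"
      using spectral[OF symA] by blast
    have dec: "diag_mat l + Ht = sp V \<mu>" using dec0 by (simp add: sp_def)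
    define e where "e k = (if 0 < \<mu> k then 1 else (0::real))" for k
    define Pr where "Pr = sp V e"
    define P where "P = sp V (\<lambda>k. max (\<mu> k) 0)"
    define N where "N = P - (diag_mat l + Ht)"
    have eig: "\<delta> / 2 \<le> \<bar>\<mu> k\<bar>" for k
      using eig_bound[OF oV dec dl, of k] dpos nHt2 by linarith
    have core_app: "norm (P - diag_mat (\<lambda>i. max (l i) 0) - hadamard (Omega l) Ht)
           \<le> K * norm (off_block l Ht) * norm Ht"
      unfolding K_def
    proof (rule core[OF l0 dl Ll dpos mpos Hts])
      show "norm Ht \<le> m / 2" using nHt2 dpos by (simp add: m_def)
      show "16 * norm Ht \<le> \<delta>" using nHt2 by simp
      show "transpose Pr = Pr" by (simp add: Pr_def sp_transpose[OF oV])
      have ee: "(\<lambda>k. e k * e k) = e" by (auto simp: e_def fun_eq_iff)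
      show "Pr ** Pr = Pr" by (simp add: Pr_def sp_mul[OF oV] ee)
      have me: "(\<lambda>k. \<mu> k * e k) = (\<lambda>k. max (\<mu> k) 0)" and em: "(\<lambda>k. e k * \<mu> k) = (\<lambda>k. max (\<mu> k) 0)"
        by (auto simp: e_def fun_eq_iff)
      show "(diag_mat l + Ht) ** Pr = P" by (simp add: dec Pr_def P_def sp_mul[OF oV] me)
      show "Pr ** (diag_mat l + Ht) = P" by (simp add: dec Pr_def P_def sp_mul[OF oV] em)
      show "N = P - (diag_mat l + Ht)" by (simp add: N_def)
    next
      fix w assume "Pr *v w = w"
      thus "m * (norm w)^2 \<le> inner w (P *v w)"
        unfolding Pr_def P_def
      proof (rule sp_pos_bound[OF oV, rotated])
        fix k show "e k = 0 \<or> m \<le> max (\<mu> k) 0" using eig[of k] by (auto simp: e_def m_def)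
      qed
    next
      fix w assume h: "(mat 1 - Pr) *v w = w"
      have "mat 1 - Pr = sp V (\<lambda>k. 1 - e k)" by (simp add: Pr_def sp_one[OF oV, symmetric] sp_diff[OF oV])
      moreover have "N = sp V (\<lambda>k. max (\<mu> k) 0 - \<mu> k)" by (simp add: N_def P_def dec sp_diff[OF oV])
      ultimately show "m * (norm w)^2 \<le> inner w (N *v w)"
        using h
      proof (simp only:)
        assume "sp V (\<lambda>k. 1 - e k) *v w = w"
        thus "m * (norm w)^2 \<le> inner w (sp V (\<lambda>k. max (\<mu> k) 0 - \<mu> k) *v w)"
        proof (rule sp_pos_bound[OF oV, rotated])
          fix k show "1 - e k = 0 \<or> m \<le> max (\<mu> k) 0 - \<mu> k" using eig[of k] by (auto simp: e_def m_def)
        qed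
      qed
    qed
    have ZH: "Z + H = sp (Q ** V) \<mu>"
    proof -
      have "H = Q ** Ht ** transpose Q"
        by (simp add: Ht_def matrix_mul_assoc QQt) (simp add: matrix_mul_assoc[symmetric] QQt)
      hence "Z + H = Q ** (diag_mat l + Ht) ** transpose Q" by (simp add: Zd matrix_add_ldistrib mm_add_r)
      also have "\<dots> = sp (Q ** V) \<mu>" by (simp add: dec0 sp_def matrix_transpose_mul matrix_mul_assoc)
      finally show ?thesis .
    qed
    have oQV: "orthogonal_matrix (Q ** V)" using oQ oV by (rule orthogonal_matrix_mul)
    have p1: "proj_psd (Z + H) = Q ** P ** transpose Q"
      unfolding ZH proj_sp[OF oQV] by (simp add: P_def sp_def matrix_transpose_mul matrix_mul_assoc)
    have p2: "proj_psd Z = Q ** diag_mat (\<lambda>i. max (l i) 0) ** transpose Q"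
      using proj_sp[OF oQ, of l] Zd by (simp add: sp_def)
    have eqM: "proj_psd (Z + H) - proj_psd Z - Q ** hadamard (Omega l) Ht ** transpose Q
        = Q ** (P - diag_mat (\<lambda>i. max (l i) 0) - hadamard (Omega l) Ht) ** transpose Q"
      by (simp add: p1 p2 mm_diff_l mm_diff_r)
    have "spec_norm (proj_psd (Z + H) - proj_psd Z - Q ** hadamard (Omega l) Ht ** transpose Q)
        \<le> norm (P - diag_mat (\<lambda>i. max (l i) 0) - hadamard (Omega l) Ht)"
      unfolding eqM using spec_conj[OF oQ] spec_le_frob order_trans by blast
    also have "\<dots> \<le> K * norm (off_block l Ht) * norm Ht" by (rule core_app)
    also have "\<dots> \<le> K * (n * spec_norm (off_block l Ht)) * (n * spec_norm H)"
    proof (intro mult_mono mult_left_mono)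
      show "norm (off_block l Ht) \<le> n * spec_norm (off_block l Ht)" unfolding n_def by (rule frob_le_spec)
      show "norm Ht \<le> n * spec_norm H" by (rule nHt)
    qed (use Kpos npos in \<open>simp_all add: spec_norm_def onorm_pos_le\<close>)
    also have "\<dots> = (K * n^2) * spec_norm (off_block l Ht) * spec_norm H" by (simp add: power2_eq_square mult_ac)
    finally show ?thesis by (simp add: Ht_def)
  qed
  show ?thesis using Cpos Kpos npos main by (intro exI[of _ C] conjI exI[of _ "K * n^2"]) auto
qed


end
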